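(* Let $S$ be the multiset consisting of $2$ copies of each odd positive integer together with $2$ additional copies of each odd positive multiple of $3$, and let $T$ be the multiset consisting of $2$ copies of each even positive integer together with $2$ additional copies of each even positive multiple of $3$ (all copies distinct). Let $D_S(N)$ be the number of partitions of $N$ into distinct elements of $S$ having an odd number of parts, and $D_T(N)$ the number of partitions of $N$ into distinct elements of $T$. Then for every $N\ge 1$, $D_S(N)=2D_T(N-1)$.
   Context: A partition of $N$ into distinct elements of a multiset is a finite set of distinct elements of it (different copies of the same integer count as distinct elements) whose values sum to $N$. $D_T(0)=1$. *)

theory Defs
  imports Main
begin

(* A multiset of positive integers is represented by its set of labelled copies:
   the pair (n, c) is the c-th copy of the integer n. *)

definition mult3 :: "nat \<Rightarrow> nat" where
  "mult3 n = (if 3 dvd n then 4 else 2)"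

definition S_elems :: "(nat \<times> nat) set" where
  "S_elems = {(n, c). n > 0 \<and> odd n \<and> c < mult3 n}"

definition T_elems :: "(nat \<times> nat) set" where
  "T_elems = {(n, c). n > 0 \<and> even n \<and> c < mult3 n}"

definition distinct_partitions :: "(nat \<times> nat) set \<Rightarrow> nat \<Rightarrow> (nat \<times> nat) set set" where
  "distinct_partitions M N = {P. P \<subseteq> M \<and> finite P \<and> (\<Sum>x\<in>P. fst x) = N}"

definition D_S :: "nat \<Rightarrow> nat" where
  "D_S N = card {P \<in> distinct_partitions S_elems N. odd (card P)}"

definition D_T :: "nat \<Rightarrow> nat" where
  "D_T N = card (distinct_partitions T_elems N)"

end

theory Submission imports Defs begin

definition PRg :: "(nat \<Rightarrow> bool) \<Rightarrow> (nat set \<times> nat set) set" where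
  "PRg P = {(U,V). finite U \<and> finite V \<and> (\<forall>u\<in>U. 0<u \<and> P u) \<and> (\<forall>v\<in>V. 0<v \<and> P v)}"

definition chg :: "nat set \<times> nat set \<Rightarrow> int" where
  "chg p = int (card (fst p)) - int (card (snd p))"

definition wt :: "nat set \<times> nat set \<Rightarrow> nat" where
  "wt p = \<Sum>(fst p) + \<Sum>(snd p)"

definition sig :: "nat set \<times> nat set \<Rightarrow> nat set \<times> nat set" where
  "sig p = (if 1 \<in> snd p then ((+) 2 ` fst p, (\<lambda>v. v - 2) ` (snd p - {1}))
            else (insert 1 ((+) 2 ` fst p), (\<lambda>v. v - 2) ` snd p))"

definition sigi :: "nat set \<times> nat set \<Rightarrow> nat set \<times> nat set" where
  "sigi p = prod.swap (sig (prod.swap p))"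

lemma PR_swap: "prod.swap p \<in> PRg P \<longleftrightarrow> p \<in> PRg P"
  by (cases p) (auto simp: PRg_def)

lemma plus2_facts:
  assumes "finite U"
  shows "card ((+) (2::nat) ` U) = card U" "\<Sum>((+) (2::nat) ` U) = \<Sum>U + 2 * card U"
proof -
  have inj: "inj_on ((+) (2::nat)) U" by (auto simp: inj_on_def)
  show "card ((+) (2::nat) ` U) = card U" using card_image[OF inj] .
  have "\<Sum>((+) (2::nat) ` U) = (\<Sum>u\<in>U. 2 + u)" using sum.reindex[OF inj, of "\<lambda>x. x"] by simp
  also have "\<dots> = \<Sum>U + 2 * card U" using assms by (induct U rule: finite_induct) auto
  finally show "\<Sum>((+) (2::nat) ` U) = \<Sum>U + 2 * card U" .
qed

lemma minus2_facts:
  assumes "finite W" "\<forall>w\<in>W. 2 \<le> w"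
  shows "card ((\<lambda>v. v - 2) ` W) = card W"
        "int (\<Sum>((\<lambda>v::nat. v - 2) ` W)) = int (\<Sum>W) - 2 * int (card W)"
proof -
  have inj: "inj_on (\<lambda>v::nat. v - 2) W"
  proof (rule inj_onI)
    fix x y assume "x \<in> W" "y \<in> W" "x - 2 = y - 2"
    moreover have "2 \<le> x" "2 \<le> y" using assms(2) \<open>x \<in> W\<close> \<open>y \<in> W\<close> by auto
    ultimately show "x = y" by arith
  qed
  show "card ((\<lambda>v. v - 2) ` W) = card W" using card_image[OF inj] .
  have "int (\<Sum>((\<lambda>v::nat. v - 2) ` W)) = int (\<Sum>w\<in>W. w - 2)" using sum.reindex[OF inj, of "\<lambda>x. x"] by simp
  also have "\<dots> = (\<Sum>w\<in>W. int w - 2)" using assms(2) by (simp add: of_nat_diff)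
  also have "\<dots> = int (\<Sum>W) - 2 * int (card W)" by (simp add: sum_subtractf)
  finally show "int (\<Sum>((\<lambda>v::nat. v - 2) ` W)) = int (\<Sum>W) - 2 * int (card W)" .
qed

lemma odd_ge3: "odd (v::nat) \<Longrightarrow> v \<noteq> 1 \<Longrightarrow> 0 < v \<Longrightarrow> 3 \<le> v"
  by presburger

lemma sig_PR: "p \<in> PRg odd \<Longrightarrow> sig p \<in> PRg odd"
proof -
  assume p: "p \<in> PRg odd"
  obtain U V where pUV: "p = (U,V)" by (cases p)
  have U: "finite U" "\<forall>u\<in>U. 0<u \<and> odd u" and V: "finite V" "\<forall>v\<in>V. 0<v \<and> odd v"
    using p pUV by (auto simp: PRg_def)
  have A: "\<forall>u\<in>(+) 2 ` U. 0 < u \<and> odd u" using U by auto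
  have B: "\<forall>v\<in>(\<lambda>v. v - 2) ` (V - {1}). 0 < v \<and> odd v"
  proof
    fix x assume "x \<in> (\<lambda>v. v - 2) ` (V - {1})"
    then obtain v where "v \<in> V" "v \<noteq> 1" "x = v - 2" by auto
    moreover have "0 < v" "odd v" using V \<open>v \<in> V\<close> by auto
    ultimately show "0 < x \<and> odd x" by presburger
  qed
  show ?thesis
  proof (cases "1 \<in> V")
    case True
    then show ?thesis using U V A B pUV by (simp add: sig_def PRg_def)
  next
    case False
    then have "V - {1} = V" by auto
    then show ?thesis using U V A B pUV False by (simp add: sig_def PRg_def)
  qed
qed

lemma sig_chg_wt:
  assumes p: "p \<in> PRg odd"
  shows "chg (sig p) = chg p + 1" "int (wt (sig p)) = int (wt p) + 2 * chg p + 1"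
proof -
  obtain U V where pUV: "p = (U,V)" by (cases p)
  have U: "finite U" "\<forall>u\<in>U. 0<u \<and> odd u" and V: "finite V" "\<forall>v\<in>V. 0<v \<and> odd v"
    using p pUV by (auto simp: PRg_def)
  have V1: "\<forall>v\<in>V - {1}. 2 \<le> v" using V(2) odd_ge3 by fastforce
  note P = plus2_facts[OF U(1)]
  have "chg (sig p) = chg p + 1 \<and> int (wt (sig p)) = int (wt p) + 2 * chg p + 1"
  proof (cases "1 \<in> V")
    case True
    note M = minus2_facts[of "V - {1}", OF _ V1]
    have c: "0 < card V" using True V(1) card_gt_0_iff by blast
    have s: "\<Sum>V = 1 + \<Sum>(V - {1})" using True V(1) by (simp add: sum.remove)
    show ?thesis using True M P c s V(1) pUV by (simp add: sig_def chg_def wt_def of_nat_diff)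
  next
    case False
    note M = minus2_facts[of V, OF V(1)]
    have V2: "\<forall>v\<in>V. 2 \<le> v" using V1 False by auto
    have n1: "1 \<notin> (+) 2 ` U" by auto
    have fi: "finite ((+) 2 ` U)" using U by auto
    show ?thesis using False M[OF V2] P pUV n1 fi by (simp add: sig_def chg_def wt_def)
  qed
  then show "chg (sig p) = chg p + 1" "int (wt (sig p)) = int (wt p) + 2 * chg p + 1" by auto
qed

lemma plus_minus2: "\<forall>w\<in>W. 2 \<le> w \<Longrightarrow> (+) (2::nat) ` ((\<lambda>v. v - 2) ` W) = W"
proof (rule set_eqI)
  assume W: "\<forall>w\<in>W. 2 \<le> w"
  fix x
  show "x \<in> (+) 2 ` ((\<lambda>v. v - 2) ` W) \<longleftrightarrow> x \<in> W"
  proof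
    assume "x \<in> (+) 2 ` ((\<lambda>v. v - 2) ` W)"
    then obtain w where "w \<in> W" "x = 2 + (w - 2)" by auto
    moreover have "2 \<le> w" using W \<open>w \<in> W\<close> by auto
    ultimately have "x = w" by simp
    then show "x \<in> W" using \<open>w \<in> W\<close> by simp
  next
    assume "x \<in> W"
    moreover have "2 \<le> x" using W \<open>x \<in> W\<close> by auto
    ultimately have "x = 2 + (x - 2)" "x - 2 \<in> (\<lambda>v. v - 2) ` W" by auto
    then show "x \<in> (+) 2 ` ((\<lambda>v. v - 2) ` W)" by (metis image_eqI)
  qed
qed

lemma minus_plus2: "(\<lambda>v::nat. v - 2) ` ((+) 2 ` W) = W"
  by (simp add: image_image)

lemma sigi_sig: assumes p: "p \<in> PRg odd" shows "sigi (sig p) = p"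
proof -
  obtain U V where pUV: "p = (U,V)" by (cases p)
  have V: "\<forall>v\<in>V. 0<v \<and> odd v"
    using p pUV by (auto simp: PRg_def)
  have V1: "\<forall>v\<in>V - {1}. 2 \<le> v" using V odd_ge3 by fastforce
  have n1: "1 \<notin> (+) (2::nat) ` U" by auto
  show ?thesis
  proof (cases "1 \<in> V")
    case True
    have "insert 1 (V - {1}) = V" using True by auto
    then show ?thesis using True n1 pUV plus_minus2[OF V1] by (simp add: sig_def sigi_def minus_plus2 image_image)
  next
    case False
    have V2: "\<forall>v\<in>V. 2 \<le> v" using V1 False by auto
    have "insert 1 ((+) (2::nat) ` U) - {1} = (+) 2 ` U" using n1 by auto
    then show ?thesis using False n1 pUV plus_minus2[OF V2] by (simp add: sig_def sigi_def minus_plus2 image_image)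
  qed
qed

lemma sigi_PR: "p \<in> PRg odd \<Longrightarrow> sigi p \<in> PRg odd"
  unfolding sigi_def using sig_PR PR_swap by metis

lemma sig_sigi: assumes p: "p \<in> PRg odd" shows "sig (sigi p) = p"
proof -
  have q: "prod.swap p \<in> PRg odd" using p PR_swap by metis
  have "prod.swap (sig (prod.swap (sig (prod.swap p)))) = prod.swap p"
    using sigi_sig[OF q] by (simp add: sigi_def)
  then show ?thesis unfolding sigi_def by (metis swap_swap)
qed

lemma sigi_chg_wt:
  assumes p: "p \<in> PRg odd"
  shows "chg (sigi p) = chg p - 1" "int (wt (sigi p)) = int (wt p) - 2 * chg p + 1"
  using sig_chg_wt[OF sigi_PR[OF p]] sig_sigi[OF p] by auto


lemma sig_pow:
  assumes p: "p \<in> PRg odd"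
  shows "(sig ^^ n) p \<in> PRg odd \<and> chg ((sig ^^ n) p) = chg p + int n
       \<and> int (wt ((sig ^^ n) p)) = int (wt p) + 2 * int n * chg p + int n ^ 2"
proof (induction n)
  case 0 then show ?case using p by simp
next
  case (Suc n)
  let ?q = "(sig ^^ n) p"
  have q: "?q \<in> PRg odd" using Suc by simp
  show ?case using Suc sig_PR[OF q] sig_chg_wt[OF q] by (simp add: algebra_simps power2_eq_square)
qed

lemma sigi_pow:
  assumes p: "p \<in> PRg odd"
  shows "(sigi ^^ n) p \<in> PRg odd \<and> chg ((sigi ^^ n) p) = chg p - int n
       \<and> int (wt ((sigi ^^ n) p)) = int (wt p) - 2 * int n * chg p + int n ^ 2"
proof (induction n)
  case 0 then show ?case using p by simp
next
  case (Suc n)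
  let ?q = "(sigi ^^ n) p"
  have q: "?q \<in> PRg odd" using Suc by simp
  show ?case using Suc sigi_PR[OF q] sigi_chg_wt[OF q] by (simp add: algebra_simps power2_eq_square)
qed

lemma sigi_sig_pow: "p \<in> PRg odd \<Longrightarrow> (sigi ^^ n) ((sig ^^ n) p) = p"
proof (induction n arbitrary: p)
  case 0 then show ?case by simp
next
  case (Suc n)
  have "(sigi ^^ Suc n) ((sig ^^ Suc n) p) = (sigi ^^ n) (sigi (sig ((sig ^^ n) p)))"
    using funpow_Suc_right[of n sigi] by simp
  also have "\<dots> = (sigi ^^ n) ((sig ^^ n) p)" using sigi_sig sig_pow Suc.prems by metis
  finally show ?case using Suc by simp
qed

lemma sig_sigi_pow: "p \<in> PRg odd \<Longrightarrow> (sig ^^ n) ((sigi ^^ n) p) = p"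
proof (induction n arbitrary: p)
  case 0 then show ?case by simp
next
  case (Suc n)
  have "(sig ^^ Suc n) ((sigi ^^ Suc n) p) = (sig ^^ n) (sig (sigi ((sigi ^^ n) p)))"
    using funpow_Suc_right[of n sig] by simp
  also have "\<dots> = (sig ^^ n) ((sigi ^^ n) p)" using sig_sigi sigi_pow Suc.prems by metis
  finally show ?case using Suc by simp
qed

definition pw :: "int \<Rightarrow> nat set \<times> nat set \<Rightarrow> nat set \<times> nat set" where
  "pw j p = (if 0 \<le> j then (sig ^^ nat j) p else (sigi ^^ nat (- j)) p)"

lemma pw_props:
  assumes p: "p \<in> PRg odd"
  shows "pw j p \<in> PRg odd" "chg (pw j p) = chg p + j"
        "int (wt (pw j p)) = int (wt p) + 2 * j * chg p + j ^ 2"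
  using sig_pow[OF p, of "nat j"] sigi_pow[OF p, of "nat (-j)"]
  by (auto simp: pw_def)

lemma pw_inv: assumes p: "p \<in> PRg odd" shows "pw j (pw (- j) p) = p"
proof (cases "j = 0")
  case True then show ?thesis by (simp add: pw_def)
next
  case False
  then show ?thesis
    using sigi_sig_pow[OF p] sig_sigi_pow[OF p] by (auto simp: pw_def)
qed

definition nf :: "nat set \<times> nat set \<Rightarrow> nat set \<times> nat set" where
  "nf p = pw (- chg p) p"

lemma nf_props:
  assumes p: "p \<in> PRg odd"
  shows "nf p \<in> PRg odd" "chg (nf p) = 0" "int (wt p) = int (wt (nf p)) + chg p ^ 2"
        "pw (chg p) (nf p) = p"
  using pw_props[OF p, of "- chg p"] pw_inv[OF p, of "chg p"]
  by (auto simp: nf_def power2_eq_square)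

lemma nf_pw: assumes q: "q \<in> PRg odd" "chg q = 0" shows "nf (pw j q) = q" "chg (pw j q) = j"
proof -
  show c: "chg (pw j q) = j" using pw_props(2)[OF q(1)] q(2) by simp
  show "nf (pw j q) = q" unfolding nf_def c using pw_inv[OF q(1), of "- j"] by simp
qed

lemma bij_nf2:
  "bij_betw (\<lambda>(p1,p2). ((chg p1, chg p2), (nf p1, nf p2)))
     {(p1,p2). p1 \<in> PRg odd \<and> p2 \<in> PRg odd \<and> Q (chg p1) (chg p2) (nf p1) (nf p2)}
     {((j,k),(q1,q2)). q1 \<in> PRg odd \<and> chg q1 = 0 \<and> q2 \<in> PRg odd \<and> chg q2 = 0 \<and> Q j k q1 q2}"
  apply (rule bij_betw_byWitness[where f' = "\<lambda>((j,k),(q1,q2)). (pw j q1, pw k q2)"])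
     apply (auto simp: nf_props)[1]
    apply (auto simp: nf_pw)[1]
   apply (auto simp: nf_props)[1]
  apply (auto simp: nf_pw pw_props)
  done


lemma chg0_even: assumes q: "q \<in> PRg odd" "chg q = 0" shows "even (wt q)"
proof -
  obtain U V where qUV: "q = (U,V)" by (cases q)
  have U: "finite U" "\<forall>u\<in>U. odd u" and V: "finite V" "\<forall>v\<in>V. odd v"
    using q qUV by (auto simp: PRg_def)
  have c: "card U = card V" using q(2) qUV by (simp add: chg_def)
  have "{u\<in>U. odd u} = U" "{v\<in>V. odd v} = V" using U V by auto
  then have "even (\<Sum>U) = even (card U)" "even (\<Sum>V) = even (card V)"
    using even_sum_iff[OF U(1), of "\<lambda>x. x"] even_sum_iff[OF V(1), of "\<lambda>x. x"] by auto
  then show ?thesis using c qUV by (simp add: wt_def)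
qed

definition phi :: "bool \<Rightarrow> int \<Rightarrow> int \<Rightarrow> int \<times> int" where
  "phi b j k = ((j + 3*k - 1) div 2, ((if b then k - j else j - k) - 1) div 2)"

definition psi :: "int \<times> int \<Rightarrow> bool \<times> int \<times> int" where
  "psi jk = (let X = 2 * fst jk + 1; Y = 2 * snd jk + 1 in
     if 4 dvd (X - Y) then (False, X - 3 * ((X - Y) div 4), (X - Y) div 4)
     else (True, X - 3 * ((X + Y) div 4), (X + Y) div 4))"

lemma psi_phi: "odd (j + k) \<Longrightarrow> psi (phi b j k) = (b, j, k)"
  unfolding psi_def phi_def Let_def by (cases b) (simp_all, presburger+)

lemma phi_psi: "psi jk = (b, j, k) \<Longrightarrow> odd (j + k) \<and> phi b j k = jk"
  unfolding psi_def phi_def Let_def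
  by (cases jk) (auto split: if_splits; presburger)

lemma phi_eq:
  assumes "odd (j + k)" "phi b j k = (j', k')"
  shows "j'^2 + j' + 3 * (k'^2 + k') = j^2 + 3 * k^2 - 1"
proof -
  define Y where "Y = (if b then k - j else j - k)"
  have X: "2 * j' + 1 = j + 3 * k" using assms unfolding phi_def by (auto; presburger)
  have Y: "2 * k' + 1 = Y" using assms unfolding phi_def Y_def by (cases b; simp; presburger)
  have Y2: "Y^2 = (j - k)^2" unfolding Y_def by (simp add: power2_eq_square algebra_simps)
  have "4 * (j'^2 + j' + 3 * (k'^2 + k')) + 4 = (2*j'+1)^2 + 3 * (2*k'+1)^2"
    by (simp add: power2_eq_square algebra_simps)
  also have "\<dots> = (j + 3*k)^2 + 3 * (j - k)^2" using X Y Y2 by simp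
  also have "\<dots> = 4 * (j^2 + 3 * k^2)" by (simp add: power2_eq_square algebra_simps)
  finally show ?thesis by simp
qed

lemma odd_sq: "odd ((j::int)^2 + 3 * k^2) \<longleftrightarrow> odd (j + k)"
  by (auto simp: even_add even_mult_iff even_power)

lemma bij_arith:
  assumes N: "odd (N::int)"
  shows "bij_betw (\<lambda>(b,((j,k),qs)). (phi b j k, qs))
    (UNIV \<times> {((j,k),(q1,q2)). q1 \<in> PRg odd \<and> chg q1 = 0 \<and> q2 \<in> PRg odd \<and> chg q2 = 0 \<and>
              int (wt q1) + j^2 + 3 * (int (wt q2) + k^2) = N})
    {((j,k),(q1,q2)). q1 \<in> PRg odd \<and> chg q1 = 0 \<and> q2 \<in> PRg odd \<and> chg q2 = 0 \<and>
              int (wt q1) + (j^2 + j) + 3 * (int (wt q2) + (k^2 + k)) = N - 1}"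
proof (rule bij_betw_byWitness[where f' = "\<lambda>(jk,qs). (fst (psi jk), ((fst (snd (psi jk)), snd (snd (psi jk))), qs))"])
  have par: "odd (j + k)" if "q1 \<in> PRg odd" "chg q1 = 0" "q2 \<in> PRg odd" "chg q2 = 0"
     "int (wt q1) + j^2 + 3 * (int (wt q2) + k^2) = N" for q1 q2 j k
  proof -
    have "even (int (wt q1))" "even (int (wt q2))" using chg0_even that by auto
    have e: "j^2 + 3*k^2 = N - int (wt q1) - 3 * int (wt q2)" using that(5) by (simp add: algebra_simps)
    have "odd (N - int (wt q1) - 3 * int (wt q2))" using \<open>even (int (wt q1))\<close> \<open>even (int (wt q2))\<close> N by presburger
    then have "odd (j^2 + 3 * k^2)" using e by simp
    then show ?thesis using odd_sq by blast
  qed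
  show "\<forall>a\<in>UNIV \<times> {((j,k),(q1,q2)). q1 \<in> PRg odd \<and> chg q1 = 0 \<and> q2 \<in> PRg odd \<and> chg q2 = 0 \<and>
              int (wt q1) + j^2 + 3 * (int (wt q2) + k^2) = N}.
     (\<lambda>(jk,qs). (fst (psi jk), ((fst (snd (psi jk)), snd (snd (psi jk))), qs)))
       ((\<lambda>(b,((j,k),qs)). (phi b j k, qs)) a) = a"
    using par psi_phi by auto
  show "\<forall>a'\<in>{((j,k),(q1,q2)). q1 \<in> PRg odd \<and> chg q1 = 0 \<and> q2 \<in> PRg odd \<and> chg q2 = 0 \<and>
              int (wt q1) + (j^2 + j) + 3 * (int (wt q2) + (k^2 + k)) = N - 1}.
     (\<lambda>(b,((j,k),qs)). (phi b j k, qs))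
       ((\<lambda>(jk,qs). (fst (psi jk), ((fst (snd (psi jk)), snd (snd (psi jk))), qs))) a') = a'"
  proof
    fix a' assume "a' \<in> {((j,k),(q1,q2)). q1 \<in> PRg odd \<and> chg q1 = 0 \<and> q2 \<in> PRg odd \<and> chg q2 = 0 \<and>
              int (wt q1) + (j^2 + j) + 3 * (int (wt q2) + (k^2 + k)) = N - 1}"
    obtain jk qs where a: "a' = (jk, qs)" by (cases a')
    obtain b j k where "psi jk = (b, j, k)" by (cases "psi jk") auto
    then show "(\<lambda>(b,((j,k),qs)). (phi b j k, qs))
       ((\<lambda>(jk,qs). (fst (psi jk), ((fst (snd (psi jk)), snd (snd (psi jk))), qs))) a') = a'"
      using phi_psi a by auto
  qed
  show "(\<lambda>(b,((j,k),qs)). (phi b j k, qs)) `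
    (UNIV \<times> {((j,k),(q1,q2)). q1 \<in> PRg odd \<and> chg q1 = 0 \<and> q2 \<in> PRg odd \<and> chg q2 = 0 \<and>
              int (wt q1) + j^2 + 3 * (int (wt q2) + k^2) = N})
    \<subseteq> {((j,k),(q1,q2)). q1 \<in> PRg odd \<and> chg q1 = 0 \<and> q2 \<in> PRg odd \<and> chg q2 = 0 \<and>
              int (wt q1) + (j^2 + j) + 3 * (int (wt q2) + (k^2 + k)) = N - 1}"
  proof (rule subsetI)
    fix x assume "x \<in> (\<lambda>(b,((j,k),qs)). (phi b j k, qs)) `
    (UNIV \<times> {((j,k),(q1,q2)). q1 \<in> PRg odd \<and> chg q1 = 0 \<and> q2 \<in> PRg odd \<and> chg q2 = 0 \<and>
              int (wt q1) + j^2 + 3 * (int (wt q2) + k^2) = N})"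
    then obtain b j k q1 q2 where x: "x = (phi b j k, (q1, q2))" and
       h: "q1 \<in> PRg odd" "chg q1 = 0" "q2 \<in> PRg odd" "chg q2 = 0"
       "int (wt q1) + j^2 + 3 * (int (wt q2) + k^2) = N" by auto
    obtain j' k' where jk: "phi b j k = (j', k')" by (cases "phi b j k")
    have "j'^2 + j' + 3 * (k'^2 + k') = j^2 + 3 * k^2 - 1" using phi_eq[OF par[OF h] jk] .
    then have "int (wt q1) + (j'^2 + j') + 3 * (int (wt q2) + (k'^2 + k')) = N - 1" using h(5) by (smt (verit))
    then show "x \<in> {((j,k),(q1,q2)). q1 \<in> PRg odd \<and> chg q1 = 0 \<and> q2 \<in> PRg odd \<and> chg q2 = 0 \<and>
              int (wt q1) + (j^2 + j) + 3 * (int (wt q2) + (k^2 + k)) = N - 1}"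
      using x jk h by simp
  qed
  show "(\<lambda>(jk,qs). (fst (psi jk), ((fst (snd (psi jk)), snd (snd (psi jk))), qs))) `
    {((j,k),(q1,q2)). q1 \<in> PRg odd \<and> chg q1 = 0 \<and> q2 \<in> PRg odd \<and> chg q2 = 0 \<and>
              int (wt q1) + (j^2 + j) + 3 * (int (wt q2) + (k^2 + k)) = N - 1}
    \<subseteq> UNIV \<times> {((j,k),(q1,q2)). q1 \<in> PRg odd \<and> chg q1 = 0 \<and> q2 \<in> PRg odd \<and> chg q2 = 0 \<and>
              int (wt q1) + j^2 + 3 * (int (wt q2) + k^2) = N}"
  proof (rule subsetI)
    fix x assume "x \<in> (\<lambda>(jk,qs). (fst (psi jk), ((fst (snd (psi jk)), snd (snd (psi jk))), qs))) `
    {((j,k),(q1,q2)). q1 \<in> PRg odd \<and> chg q1 = 0 \<and> q2 \<in> PRg odd \<and> chg q2 = 0 \<and>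
              int (wt q1) + (j^2 + j) + 3 * (int (wt q2) + (k^2 + k)) = N - 1}"
    then obtain j' k' q1 q2 where x: "x = (fst (psi (j',k')), ((fst (snd (psi (j',k'))), snd (snd (psi (j',k')))), (q1,q2)))" and
      h: "q1 \<in> PRg odd" "chg q1 = 0" "q2 \<in> PRg odd" "chg q2 = 0"
       "int (wt q1) + (j'^2 + j') + 3 * (int (wt q2) + (k'^2 + k')) = N - 1" by auto
    obtain b j k where ps: "psi (j', k') = (b, j, k)" by (cases "psi (j', k')") auto
    have o: "odd (j + k)" "phi b j k = (j', k')" using phi_psi[OF ps] by auto
    have "j'^2 + j' + 3 * (k'^2 + k') = j^2 + 3 * k^2 - 1" using phi_eq[OF o] .
    then have "int (wt q1) + j^2 + 3 * (int (wt q2) + k^2) = N" using h(5) by (smt (verit))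
    then show "x \<in> UNIV \<times> {((j,k),(q1,q2)). q1 \<in> PRg odd \<and> chg q1 = 0 \<and> q2 \<in> PRg odd \<and> chg q2 = 0 \<and>
              int (wt q1) + j^2 + 3 * (int (wt q2) + k^2) = N}"
      using x ps h by simp
  qed
qed


lemma plus1_facts:
  assumes "finite U"
  shows "card ((+) (1::nat) ` U) = card U" "\<Sum>((+) (1::nat) ` U) = \<Sum>U + card U"
proof -
  have inj: "inj_on ((+) (1::nat)) U" by (auto simp: inj_on_def)
  show "card ((+) (1::nat) ` U) = card U" using card_image[OF inj] .
  have "\<Sum>((+) (1::nat) ` U) = (\<Sum>u\<in>U. 1 + u)" using sum.reindex[OF inj, of "\<lambda>x. x"] by simp
  also have "\<dots> = \<Sum>U + card U" using assms by (induct U rule: finite_induct) auto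
  finally show "\<Sum>((+) (1::nat) ` U) = \<Sum>U + card U" .
qed

lemma minus1_facts:
  assumes "finite W" "\<forall>w\<in>W. 1 \<le> w"
  shows "card ((\<lambda>v. v - 1) ` W) = card W"
        "int (\<Sum>((\<lambda>v::nat. v - 1) ` W)) = int (\<Sum>W) - int (card W)"
proof -
  have inj: "inj_on (\<lambda>v::nat. v - 1) W"
  proof (rule inj_onI)
    fix x y assume "x \<in> W" "y \<in> W" "x - 1 = y - 1"
    moreover have "1 \<le> x" "1 \<le> y" using assms(2) \<open>x \<in> W\<close> \<open>y \<in> W\<close> by auto
    ultimately show "x = y" by arith
  qed
  show "card ((\<lambda>v. v - 1) ` W) = card W" using card_image[OF inj] .
  have "int (\<Sum>((\<lambda>v::nat. v - 1) ` W)) = int (\<Sum>w\<in>W. w - 1)" using sum.reindex[OF inj, of "\<lambda>x. x"] by simp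
  also have "\<dots> = (\<Sum>w\<in>W. int w - 1)" using assms(2) by (simp add: of_nat_diff)
  also have "\<dots> = int (\<Sum>W) - int (card W)" by (simp add: sum_subtractf)
  finally show "int (\<Sum>((\<lambda>v::nat. v - 1) ` W)) = int (\<Sum>W) - int (card W)" .
qed

lemma plus_minus1: "\<forall>w\<in>W. 1 \<le> w \<Longrightarrow> (+) (1::nat) ` ((\<lambda>v. v - 1) ` W) = W"
proof (rule set_eqI)
  assume W: "\<forall>w\<in>W. 1 \<le> w"
  fix x
  show "x \<in> (+) 1 ` ((\<lambda>v. v - 1) ` W) \<longleftrightarrow> x \<in> W"
  proof
    assume "x \<in> (+) 1 ` ((\<lambda>v. v - 1) ` W)"
    then obtain w where "w \<in> W" "x = 1 + (w - 1)" by auto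
    moreover have "1 \<le> w" using W \<open>w \<in> W\<close> by auto
    ultimately have "x = w" by simp
    then show "x \<in> W" using \<open>w \<in> W\<close> by simp
  next
    assume "x \<in> W"
    moreover have "1 \<le> x" using W \<open>x \<in> W\<close> by auto
    ultimately have "x = 1 + (x - 1)" "x - 1 \<in> (\<lambda>v. v - 1) ` W" by auto
    then show "x \<in> (+) 1 ` ((\<lambda>v. v - 1) ` W)" by (metis image_eqI)
  qed
qed

definition ti :: "bool \<Rightarrow> nat set \<times> nat set \<Rightarrow> nat set \<times> nat set" where
  "ti b a = ((\<lambda>x. x - 1) ` fst a, (if b then insert 1 ((+) 1 ` snd a) else (+) 1 ` snd a))"

definition tau :: "nat set \<times> nat set \<Rightarrow> nat set \<times> nat set" where
  "tau p = ((+) 1 ` fst p, (\<lambda>v. v - 1) ` (snd p - {1}))"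

definition en :: "nat set \<times> nat set \<Rightarrow> int" where
  "en p = int (wt p) + chg p"

lemma ti_facts:
  assumes a: "a \<in> PRg even"
  shows "ti b a \<in> PRg odd" "(1 \<in> snd (ti b a)) = b" "tau (ti b a) = a" "en (ti b a) = int (wt a)"
proof -
  obtain A B where aAB: "a = (A,B)" by (cases a)
  have A: "finite A" "\<forall>u\<in>A. 0<u \<and> even u" and B: "finite B" "\<forall>v\<in>B. 0<v \<and> even v"
    using a aAB by (auto simp: PRg_def)
  have A1: "\<forall>u\<in>A. 1 \<le> u" using A by auto
  have oA: "\<forall>x\<in>(\<lambda>x. x - 1) ` A. 0 < x \<and> odd x"
  proof
    fix x assume "x \<in> (\<lambda>x. x - 1) ` A"
    then obtain u where "u \<in> A" "x = u - 1" by auto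
    moreover have "0 < u" "even u" using A \<open>u \<in> A\<close> by auto
    ultimately show "0 < x \<and> odd x" by presburger
  qed
  have oB: "\<forall>x\<in>(+) 1 ` B. 0 < x \<and> odd x" using B by auto
  have n1: "1 \<notin> (+) (1::nat) ` B" using B by auto
  show "ti b a \<in> PRg odd" using A B oA oB aAB by (auto simp: ti_def PRg_def)
  show "(1 \<in> snd (ti b a)) = b" using n1 aAB by (simp add: ti_def)
  have "insert 1 ((+) (1::nat) ` B) - {1} = (+) 1 ` B" "(+) (1::nat) ` B - {1} = (+) 1 ` B" using n1 by auto
  then show "tau (ti b a) = a" using aAB plus_minus1[OF A1] by (simp add: ti_def tau_def image_image)
  note M = minus1_facts[OF A(1) A1]
  note P = plus1_facts[OF B(1)]
  have fi: "finite ((+) 1 ` B)" using B by auto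
  show "en (ti b a) = int (wt a)"
    using M P n1 fi aAB by (cases b) (simp_all add: ti_def en_def wt_def chg_def)
qed

lemma tau_facts:
  assumes p: "p \<in> PRg odd"
  shows "tau p \<in> PRg even" "ti (1 \<in> snd p) (tau p) = p"
proof -
  obtain U V where pUV: "p = (U,V)" by (cases p)
  have U: "finite U" "\<forall>u\<in>U. 0<u \<and> odd u" and V: "finite V" "\<forall>v\<in>V. 0<v \<and> odd v"
    using p pUV by (auto simp: PRg_def)
  have V1: "\<forall>v\<in>V - {1}. 1 \<le> v"
  proof
    fix v assume "v \<in> V - {1}"
    then have "0 < v" using V(2) by blast
    then show "1 \<le> v" by simp
  qed
  have eV: "\<forall>x\<in>(\<lambda>v. v - 1) ` (V - {1}). 0 < x \<and> even x"
  proof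
    fix x assume "x \<in> (\<lambda>v. v - 1) ` (V - {1})"
    then obtain v where "v \<in> V" "v \<noteq> 1" "x = v - 1" by auto
    moreover have "0 < v" "odd v" using V \<open>v \<in> V\<close> by auto
    ultimately show "0 < x \<and> even x" by presburger
  qed
  show "tau p \<in> PRg even" using U V eV pUV by (auto simp: tau_def PRg_def)
  have q: "(\<lambda>x. x - 1) ` ((+) (1::nat) ` U) = U" by (simp add: image_image)
  show "ti (1 \<in> snd p) (tau p) = p"
  proof (cases "1 \<in> V")
    case True
    have "insert 1 (V - {1}) = V" using True by auto
    then show ?thesis using True pUV q plus_minus1[OF V1] by (simp add: ti_def tau_def)
  next
    case False
    then have "V - {1} = V" by auto
    then show ?thesis using False pUV q plus_minus1[OF V1] by (simp add: ti_def tau_def)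
  qed
qed

lemma ti_one: "a \<in> PRg even \<Longrightarrow> (Suc 0 \<in> snd (ti b a)) = b"
  using ti_facts(2) by simp

lemma tau_one: "p \<in> PRg odd \<Longrightarrow> ti (Suc 0 \<in> snd p) (tau p) = p"
  using tau_facts(2) by simp

lemma en_tau: "p \<in> PRg odd \<Longrightarrow> en p = int (wt (tau p))"
  using ti_facts(4)[OF tau_facts(1), of p "1 \<in> snd p"] tau_facts(2)[of p] by simp

lemma bij_T:
  "bij_betw (\<lambda>(b1,b2,(a1,a2)). (ti b1 a1, ti b2 a2))
     (UNIV \<times> UNIV \<times> {(a1,a2). a1 \<in> PRg even \<and> a2 \<in> PRg even \<and> int (wt a1) + 3 * int (wt a2) = M})
     {(p1,p2). p1 \<in> PRg odd \<and> p2 \<in> PRg odd \<and> en p1 + 3 * en p2 = M}"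
  apply (rule bij_betw_byWitness[where f' = "\<lambda>(p1,p2). (1 \<in> snd p1, 1 \<in> snd p2, (tau p1, tau p2))"])
     apply (auto simp: ti_facts ti_one)[1]
    apply (auto simp: tau_facts tau_one)[1]
   apply (auto simp: ti_facts ti_one)[1]
  apply (auto simp: tau_facts en_tau)
  done


definition Phi :: "(nat set \<times> nat set) \<times> (nat set \<times> nat set) \<Rightarrow> (nat \<times> nat) set" where
  "Phi pp = (\<lambda>u. (u, 0)) ` fst (fst pp) \<union> (\<lambda>u. (u, 1)) ` snd (fst pp)
          \<union> (\<lambda>u. (3*u, 2)) ` fst (snd pp) \<union> (\<lambda>u. (3*u, 3)) ` snd (snd pp)"

definition Psi :: "(nat \<times> nat) set \<Rightarrow> (nat set \<times> nat set) \<times> (nat set \<times> nat set)" where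
  "Psi P = (({n. (n,0) \<in> P}, {n. (n,1) \<in> P}), ({n. (3*n,2) \<in> P}, {n. (3*n,3) \<in> P}))"

lemma sum_Phi:
  assumes "finite U1" "finite V1" "finite U2" "finite V2"
  shows "(\<Sum>x\<in>Phi ((U1,V1),(U2,V2)). fst x) = wt (U1,V1) + 3 * wt (U2,V2)"
proof -
  let ?A = "(\<lambda>u. (u, 0::nat)) ` U1" and ?B = "(\<lambda>u. (u, 1::nat)) ` V1"
  let ?C = "(\<lambda>u. (3*u, 2::nat)) ` U2" and ?D = "(\<lambda>u. (3*u, 3::nat)) ` V2"
  have f: "finite ?A" "finite ?B" "finite ?C" "finite ?D" using assms by auto
  have sA: "(\<Sum>x\<in>?A. fst x) = \<Sum>U1" by (subst sum.reindex) (auto simp: inj_on_def)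
  have sB: "(\<Sum>x\<in>?B. fst x) = \<Sum>V1" by (subst sum.reindex) (auto simp: inj_on_def)
  have sC: "(\<Sum>x\<in>?C. fst x) = 3 * \<Sum>U2" by (subst sum.reindex) (auto simp: inj_on_def sum_distrib_left)
  have sD: "(\<Sum>x\<in>?D. fst x) = 3 * \<Sum>V2" by (subst sum.reindex) (auto simp: inj_on_def sum_distrib_left)
  have "(\<Sum>x\<in>?A \<union> ?B \<union> ?C \<union> ?D. fst x) = (\<Sum>x\<in>?A \<union> ?B \<union> ?C. fst x) + (\<Sum>x\<in>?D. fst x)"
    using f by (intro sum.union_disjoint) auto
  also have "(\<Sum>x\<in>?A \<union> ?B \<union> ?C. fst x) = (\<Sum>x\<in>?A \<union> ?B. fst x) + (\<Sum>x\<in>?C. fst x)"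
    using f by (intro sum.union_disjoint) auto
  also have "(\<Sum>x\<in>?A \<union> ?B. fst x) = (\<Sum>x\<in>?A. fst x) + (\<Sum>x\<in>?B. fst x)"
    using f by (intro sum.union_disjoint) auto
  finally show ?thesis using sA sB sC sD by (simp add: Phi_def wt_def)
qed

lemma bij_part:
  assumes P3: "\<And>n. P (3*n) = P n"
  shows "bij_betw Phi {(p1,p2). p1 \<in> PRg P \<and> p2 \<in> PRg P \<and> wt p1 + 3 * wt p2 = N}
           (distinct_partitions {(n,c). n > 0 \<and> P n \<and> c < mult3 n} N)"
proof (rule bij_betw_byWitness[where f' = Psi])
  show "\<forall>a\<in>{(p1,p2). p1 \<in> PRg P \<and> p2 \<in> PRg P \<and> wt p1 + 3 * wt p2 = N}. Psi (Phi a) = a"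
    by (auto simp: Psi_def Phi_def)
  show "Phi ` {(p1,p2). p1 \<in> PRg P \<and> p2 \<in> PRg P \<and> wt p1 + 3 * wt p2 = N}
           \<subseteq> distinct_partitions {(n,c). n > 0 \<and> P n \<and> c < mult3 n} N"
  proof (rule subsetI)
    fix x assume "x \<in> Phi ` {(p1,p2). p1 \<in> PRg P \<and> p2 \<in> PRg P \<and> wt p1 + 3 * wt p2 = N}"
    then obtain U1 V1 U2 V2 where x: "x = Phi ((U1,V1),(U2,V2))" and
      h: "(U1,V1) \<in> PRg P" "(U2,V2) \<in> PRg P" "wt (U1,V1) + 3 * wt (U2,V2) = N" by auto
    have fin: "finite U1" "finite V1" "finite U2" "finite V2" using h by (auto simp: PRg_def)
    have "Phi ((U1,V1),(U2,V2)) \<subseteq> {(n,c). n > 0 \<and> P n \<and> c < mult3 n}"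
      using h P3 by (auto simp: Phi_def PRg_def mult3_def)
    moreover have "finite (Phi ((U1,V1),(U2,V2)))" using fin by (simp add: Phi_def)
    ultimately show "x \<in> distinct_partitions {(n,c). n > 0 \<and> P n \<and> c < mult3 n} N"
      using sum_Phi[OF fin] h(3) x by (simp add: distinct_partitions_def)
  qed
  have PhiPsi: "Phi (Psi Q) = Q" and PsiIn: "Psi Q \<in> {(p1,p2). p1 \<in> PRg P \<and> p2 \<in> PRg P \<and> wt p1 + 3 * wt p2 = N}"
    if Q: "Q \<in> distinct_partitions {(n,c). n > 0 \<and> P n \<and> c < mult3 n} N" for Q
  proof -
    have Qs: "Q \<subseteq> {(n,c). n > 0 \<and> P n \<and> c < mult3 n}" and fQ: "finite Q" and sQ: "(\<Sum>x\<in>Q. fst x) = N"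
      using Q by (auto simp: distinct_partitions_def)
    show PP: "Phi (Psi Q) = Q"
    proof (rule set_eqI)
      fix x :: "nat \<times> nat"
      obtain n c where x: "x = (n, c)" by (cases x)
      show "x \<in> Phi (Psi Q) \<longleftrightarrow> x \<in> Q"
      proof
        assume "x \<in> Phi (Psi Q)" then show "x \<in> Q" by (auto simp: Phi_def Psi_def)
      next
        assume xQ: "x \<in> Q"
        then have "n > 0" "c < mult3 n" using Qs x by auto
        then have "c = 0 \<or> c = 1 \<or> (c \<in> {2,3} \<and> n = 3 * (n div 3))"
          by (auto simp: mult3_def split: if_splits)
        then show "x \<in> Phi (Psi Q)" using xQ x unfolding Phi_def Psi_def
          by (auto simp: image_iff) (metis+)
      qed
    qed
    have fin: "finite {n. (n, c) \<in> Q}" for c :: nat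
      using finite_vimageI[OF fQ, of "\<lambda>n. (n, c)"] by (simp add: inj_on_def vimage_def)
    have fin3: "finite {n. (3*n, c) \<in> Q}" for c :: nat
      using finite_vimageI[OF fQ, of "\<lambda>n. (3*n, c)"] by (simp add: inj_on_def vimage_def)
    have g: "\<forall>u\<in>{n. (n, c) \<in> Q}. 0 < u \<and> P u" for c using Qs by auto
    have g3: "\<forall>u\<in>{n. (3*n, c) \<in> Q}. 0 < u \<and> P u" for c using Qs P3 by auto
    have "(\<Sum>x\<in>Phi (Psi Q). fst x) = wt (fst (Psi Q)) + 3 * wt (snd (Psi Q))"
      using sum_Phi[OF fin[of 0] fin[of 1] fin3[of 2] fin3[of 3]] unfolding Psi_def by simp
    then have "wt (fst (Psi Q)) + 3 * wt (snd (Psi Q)) = N"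
      using PP sQ by simp
    then show "Psi Q \<in> {(p1,p2). p1 \<in> PRg P \<and> p2 \<in> PRg P \<and> wt p1 + 3 * wt p2 = N}"
      using fin fin3 g g3 by (simp add: Psi_def PRg_def)
  qed
  show "\<forall>a'\<in>distinct_partitions {(n,c). n > 0 \<and> P n \<and> c < mult3 n} N. Phi (Psi a') = a'"
    using PhiPsi by simp
  show "Psi ` distinct_partitions {(n,c). n > 0 \<and> P n \<and> c < mult3 n} N
           \<subseteq> {(p1,p2). p1 \<in> PRg P \<and> p2 \<in> PRg P \<and> wt p1 + 3 * wt p2 = N}"
    by (rule image_subsetI) (rule PsiIn)
qed


lemma S_parity:
  assumes "P \<in> distinct_partitions S_elems N"
  shows "even (card P) = even N"
proof -
  have P: "P \<subseteq> S_elems" "finite P" "(\<Sum>x\<in>P. fst x) = N" using assms by (auto simp: distinct_partitions_def)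
  have "{x\<in>P. odd (fst x)} = P" using P(1) by (auto simp: S_elems_def)
  then show ?thesis using even_sum_iff[OF P(2), of fst] P(3) by simp
qed

lemma T_parity:
  assumes "P \<in> distinct_partitions T_elems N"
  shows "even N"
proof -
  have P: "P \<subseteq> T_elems" "finite P" "(\<Sum>x\<in>P. fst x) = N" using assms by (auto simp: distinct_partitions_def)
  have E: "{x\<in>P. odd (fst x)} = {}" using P(1) by (auto simp: T_elems_def)
  have "even (sum fst P)" unfolding even_sum_iff[OF P(2)] E by simp
  then show ?thesis using P(3) by simp
qed

theorem theorem3p6:
  fixes N :: nat
  assumes "N \<ge> 1"
  shows "D_S N = 2 * D_T (N - 1)"
proof (cases "odd N")
  case False
  have E1: "{P \<in> distinct_partitions S_elems N. odd (card P)} = {}" using S_parity False by blast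
  have E2: "distinct_partitions T_elems (N - 1) = {}"
    using T_parity False assms by (metis equals0I even_diff_nat odd_one le_add_diff_inverse2 even_add)
  show ?thesis unfolding D_S_def D_T_def E1 E2 by simp
next
  case True
  have "{P \<in> distinct_partitions S_elems N. odd (card P)} = distinct_partitions S_elems N"
    using S_parity True by blast
  then have DS: "D_S N = card (distinct_partitions S_elems N)" by (simp add: D_S_def)
  have b1: "bij_betw Phi {(p1,p2). p1 \<in> PRg odd \<and> p2 \<in> PRg odd \<and> wt p1 + 3 * wt p2 = N}
           (distinct_partitions S_elems N)"
    unfolding S_elems_def by (rule bij_part) simp
  have e1: "{(p1,p2). p1 \<in> PRg odd \<and> p2 \<in> PRg odd \<and> wt p1 + 3 * wt p2 = N}
     = {(p1,p2). p1 \<in> PRg odd \<and> p2 \<in> PRg odd \<and>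
         (\<lambda>j k q1 q2. int (wt q1) + j^2 + 3 * (int (wt q2) + k^2) = int N) (chg p1) (chg p2) (nf p1) (nf p2)}"
  proof -
    have "(wt p1 + 3 * wt p2 = N) = (int (wt (nf p1)) + (chg p1)^2 + 3 * (int (wt (nf p2)) + (chg p2)^2) = int N)"
      if "p1 \<in> PRg odd" "p2 \<in> PRg odd" for p1 p2
    proof -
      have "(wt p1 + 3 * wt p2 = N) = (int (wt p1) + 3 * int (wt p2) = int N)" by linarith
      then show ?thesis using nf_props(3)[OF that(1)] nf_props(3)[OF that(2)] by simp
    qed
    then show ?thesis by auto
  qed
  note b2 = bij_nf2[of "\<lambda>j k q1 q2. int (wt q1) + j^2 + 3 * (int (wt q2) + k^2) = int N"]
  have Nodd: "odd (int N)" using True by simp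
  note b3 = bij_arith[OF Nodd]
  have e4: "{(p1,p2). p1 \<in> PRg odd \<and> p2 \<in> PRg odd \<and> en p1 + 3 * en p2 = int (N - 1)}
     = {(p1,p2). p1 \<in> PRg odd \<and> p2 \<in> PRg odd \<and>
         (\<lambda>j k q1 q2. int (wt q1) + (j^2 + j) + 3 * (int (wt q2) + (k^2 + k)) = int N - 1) (chg p1) (chg p2) (nf p1) (nf p2)}"
  proof -
    have "(en p1 + 3 * en p2 = int (N - 1)) = (int (wt (nf p1)) + ((chg p1)^2 + chg p1) + 3 * (int (wt (nf p2)) + ((chg p2)^2 + chg p2)) = int N - 1)"
      if "p1 \<in> PRg odd" "p2 \<in> PRg odd" for p1 p2
      using nf_props(3)[OF that(1)] nf_props(3)[OF that(2)] assms by (simp add: en_def of_nat_diff algebra_simps)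
    then show ?thesis by auto
  qed
  note b4 = bij_nf2[of "\<lambda>j k q1 q2. int (wt q1) + (j^2 + j) + 3 * (int (wt q2) + (k^2 + k)) = int N - 1"]
  note b5 = bij_T[of "int (N - 1)"]
  have e6: "{(a1,a2). a1 \<in> PRg even \<and> a2 \<in> PRg even \<and> int (wt a1) + 3 * int (wt a2) = int (N - 1)}
     = {(a1,a2). a1 \<in> PRg even \<and> a2 \<in> PRg even \<and> wt a1 + 3 * wt a2 = N - 1}"
    by (auto simp del: of_nat_diff)
  have b6: "bij_betw Phi {(a1,a2). a1 \<in> PRg even \<and> a2 \<in> PRg even \<and> wt a1 + 3 * wt a2 = N - 1}
           (distinct_partitions T_elems (N - 1))"
    unfolding T_elems_def by (rule bij_part) simp
  have c1: "D_S N = card {(p1,p2). p1 \<in> PRg odd \<and> p2 \<in> PRg odd \<and> wt p1 + 3 * wt p2 = N}"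
    using DS bij_betw_same_card[OF b1] by simp
  have c2: "2 * D_S N = card ((UNIV::bool set) \<times> {((j,k),(q1,q2)). q1 \<in> PRg odd \<and> chg q1 = 0 \<and> q2 \<in> PRg odd \<and> chg q2 = 0 \<and>
              int (wt q1) + j^2 + 3 * (int (wt q2) + k^2) = int N})"
    using c1 e1 bij_betw_same_card[OF b2] by (simp add: card_cartesian_product card_UNIV_bool)
  have c3: "2 * D_S N = card {(p1,p2). p1 \<in> PRg odd \<and> p2 \<in> PRg odd \<and> en p1 + 3 * en p2 = int (N - 1)}"
    using c2 bij_betw_same_card[OF b3] bij_betw_same_card[OF b4] e4 by simp
  have c4: "2 * D_S N = 4 * card {(a1,a2). a1 \<in> PRg even \<and> a2 \<in> PRg even \<and> wt a1 + 3 * wt a2 = N - 1}"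
    using c3 bij_betw_same_card[OF b5] e6 by (simp add: card_cartesian_product card_UNIV_bool)
  then show ?thesis using bij_betw_same_card[OF b6] by (simp add: D_T_def)
qed

end
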